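(* Let $P$ be an order having at least one maximum chain. If $P$ has a relatively maximum full trunk $R$, then $R$ is the union of all maximum chains of $P$. Moreover, $P$ has a relatively maximum full trunk if and only if the union of all maximum chains of $P$ is a trunk.
   Context: Orders are partial orders; $x\sim y$ means $x\ne y$ and $x,y$ incomparable. A trunk of $P$ is a subset $T$ (with the induced order) such that for all pairwise distinct $x,y,z\in T$, $x\sim y$ and $y\sim z$ imply $x\sim z$. A chain of $P$ is maximum if it is maximal under inclusion and no chain of $P$ has greater cardinality. A full trunk is a trunk containing at least one maximum chain of $P$. A relatively maximum full trunk is a full trunk that is the unique full trunk of $P$ maximal under inclusion. *)

theory Defs
  imports Main
begin

text \<open>The order P is the type 'a with its partial order (class order).\<close>

definition incomp :: "'a::order \<Rightarrow> 'a \<Rightarrow> bool" where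
  "incomp x y \<longleftrightarrow> x \<noteq> y \<and> \<not> x \<le> y \<and> \<not> y \<le> x"

definition trunk :: "'a::order set \<Rightarrow> bool" where
  "trunk T \<longleftrightarrow> (\<forall>x\<in>T. \<forall>y\<in>T. \<forall>z\<in>T. x \<noteq> y \<and> y \<noteq> z \<and> x \<noteq> z \<longrightarrow>
      incomp x y \<and> incomp y z \<longrightarrow> incomp x z)"

definition maximal_chain :: "'a::order set \<Rightarrow> bool" where
  "maximal_chain C \<longleftrightarrow> Complete_Partial_Order.chain (\<le>) C \<and>
      (\<forall>D. Complete_Partial_Order.chain (\<le>) D \<and> C \<subseteq> D \<longrightarrow> D = C)"

definition maximum_chain :: "'a::order set \<Rightarrow> bool" where
  "maximum_chain C \<longleftrightarrow> maximal_chain C \<and>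
      (\<nexists>D::'a set. Complete_Partial_Order.chain (\<le>) D \<and> (card_of C, card_of D) \<in> ordLess)"

definition full_trunk :: "'a::order set \<Rightarrow> bool" where
  "full_trunk T \<longleftrightarrow> trunk T \<and> (\<exists>C. maximum_chain C \<and> C \<subseteq> T)"

definition maximal_full_trunk :: "'a::order set \<Rightarrow> bool" where
  "maximal_full_trunk T \<longleftrightarrow> full_trunk T \<and> (\<forall>S. full_trunk S \<and> T \<subseteq> S \<longrightarrow> S = T)"

definition rel_max_full_trunk :: "'a::order set \<Rightarrow> bool" where
  "rel_max_full_trunk R \<longleftrightarrow> maximal_full_trunk R \<and> (\<forall>S. maximal_full_trunk S \<longrightarrow> S = R)"

end

theory Submission
  imports Defs
begin

lemma chain_le_iff: "Complete_Partial_Order.chain (\<le>) D \<longleftrightarrow> (\<forall>x\<in>D. \<forall>y\<in>D. x \<le> y \<or> y \<le> (x::'a::order))"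
  unfolding Complete_Partial_Order.chain_def by blast

lemma trunkD: "trunk T \<Longrightarrow> x\<in>T \<Longrightarrow> y\<in>T \<Longrightarrow> z\<in>T \<Longrightarrow> x \<noteq> y \<Longrightarrow> y \<noteq> z \<Longrightarrow> x \<noteq> z
  \<Longrightarrow> incomp x y \<Longrightarrow> incomp y z \<Longrightarrow> incomp x z"
  unfolding trunk_def by blast

lemma union_chain_three:
  assumes "c \<in> chains A" "c \<noteq> {}" "x \<in> \<Union>c" "y \<in> \<Union>c" "z \<in> \<Union>c"
  shows "\<exists>X\<in>c. x \<in> X \<and> y \<in> X \<and> z \<in> X"
proof -
  from assms(3) obtain X where X: "X\<in>c" "x\<in>X" by blast
  from assms(4) obtain Y where Y: "Y\<in>c" "y\<in>Y" by blast
  from assms(5) obtain Z where Z: "Z\<in>c" "z\<in>Z" by blast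
  have "\<exists>W\<in>c. X \<subseteq> W \<and> Y \<subseteq> W"
    using chainsD[OF assms(1) X(1) Y(1)] X(1) Y(1) by (metis order_refl)
  then obtain W where W: "W\<in>c" "X \<subseteq> W" "Y \<subseteq> W" by metis
  have "\<exists>V\<in>c. W \<subseteq> V \<and> Z \<subseteq> V"
    using chainsD[OF assms(1) W(1) Z(1)] W(1) Z(1) by (metis order_refl)
  then obtain V where V: "V\<in>c" "W \<subseteq> V" "Z \<subseteq> V" by metis
  show ?thesis using V W X Y Z by (meson subsetD)
qed

lemma extend_chain:
  fixes C :: "'a::order set"
  assumes "Complete_Partial_Order.chain (\<le>) C"
  shows "\<exists>M. maximal_chain M \<and> C \<subseteq> M"
proof -
  let ?A = "{D. Complete_Partial_Order.chain (\<le>) D \<and> C \<subseteq> D}"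
  have "\<forall>c\<in>chains ?A. \<exists>U\<in>?A. \<forall>X\<in>c. X \<subseteq> U"
  proof
    fix c assume c: "c \<in> chains ?A"
    show "\<exists>U\<in>?A. \<forall>X\<in>c. X \<subseteq> U"
    proof (cases "c = {}")
      case True then show ?thesis using assms by blast
    next
      case False
      have "\<Union>c \<in> ?A"
      proof -
        have "Complete_Partial_Order.chain (\<le>) (\<Union>c)"
          unfolding chain_le_iff
        proof (intro ballI)
          fix x y assume "x \<in> \<Union>c" "y \<in> \<Union>c"
          then obtain X where "X\<in>c" "x\<in>X" "y\<in>X" using union_chain_three[OF c False, of x y y] by blast
          then show "x \<le> y \<or> y \<le> x" using chainsD2[OF c] by (auto simp: chain_le_iff)
        qed
        moreover have "C \<subseteq> \<Union>c" using False chainsD2[OF c] by blast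
        ultimately show ?thesis by blast
      qed
      then show ?thesis by blast
    qed
  qed
  from Zorn_Lemma2[OF this] obtain M where M: "M \<in> ?A" "\<forall>X\<in>?A. M \<subseteq> X \<longrightarrow> X = M" by blast
  have "maximal_chain M" unfolding maximal_chain_def using M by blast
  then show ?thesis using M by blast
qed

lemma extend_trunk:
  fixes C :: "'a::order set"
  assumes "Complete_Partial_Order.chain (\<le>) C"
  shows "\<exists>M. trunk M \<and> C \<subseteq> M \<and> (\<forall>S. trunk S \<and> M \<subseteq> S \<longrightarrow> S = M)"
proof -
  let ?A = "{D. trunk D \<and> C \<subseteq> D}"
  have "\<forall>c\<in>chains ?A. \<exists>U\<in>?A. \<forall>X\<in>c. X \<subseteq> U"
  proof
    fix c assume c: "c \<in> chains ?A"
    show "\<exists>U\<in>?A. \<forall>X\<in>c. X \<subseteq> U"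
    proof (cases "c = {}")
      case True
      have "trunk C" using assms unfolding trunk_def incomp_def chain_le_iff by blast
      then show ?thesis using True by blast
    next
      case False
      have "\<Union>c \<in> ?A"
      proof -
        have "trunk (\<Union>c)"
          unfolding trunk_def
        proof (intro ballI)
          fix x y z assume "x \<in> \<Union>c" "y \<in> \<Union>c" "z \<in> \<Union>c"
          then obtain X where "X\<in>c" "x\<in>X" "y\<in>X" "z\<in>X" using union_chain_three[OF c False] by blast
          moreover have "trunk X" using \<open>X\<in>c\<close> chainsD2[OF c] by blast
          ultimately show "x \<noteq> y \<and> y \<noteq> z \<and> x \<noteq> z \<longrightarrow> incomp x y \<and> incomp y z \<longrightarrow> incomp x z"
            using trunkD by blast
        qed
        moreover have "C \<subseteq> \<Union>c" using False chainsD2[OF c] by blast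
        ultimately show ?thesis by blast
      qed
      then show ?thesis by blast
    qed
  qed
  from Zorn_Lemma2[OF this] obtain M where M: "M \<in> ?A" "\<forall>X\<in>?A. M \<subseteq> X \<longrightarrow> X = M" by blast
  have M1: "trunk M" "C \<subseteq> M" using M(1) by auto
  have M2: "\<forall>S. trunk S \<and> M \<subseteq> S \<longrightarrow> S = M"
  proof (intro allI impI)
    fix S assume "trunk S \<and> M \<subseteq> S"
    then have "S \<in> ?A" "M \<subseteq> S" using M1 by auto
    then show "S = M" using M(2) by blast
  qed
  show ?thesis using M1 M2 by blast
qed

lemma trunk_in_union:
  fixes S :: "'a::order set"
  assumes S: "trunk S" and C: "maximum_chain C" "C \<subseteq> S" and x: "x \<in> S"
  shows "\<exists>M. maximum_chain M \<and> x \<in> M"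
proof (cases "x \<in> C")
  case True then show ?thesis using C by blast
next
  case False
  have Cch: "Complete_Partial_Order.chain (\<le>) C" and Cmax: "\<And>D. Complete_Partial_Order.chain (\<le>) D \<Longrightarrow> C \<subseteq> D \<Longrightarrow> D = C"
    using C unfolding maximum_chain_def maximal_chain_def by blast+
  have "\<exists>c\<in>C. incomp x c"
  proof (rule ccontr)
    assume "\<not> ?thesis"
    then have "Complete_Partial_Order.chain (\<le>) (insert x C)"
      using Cch False unfolding chain_le_iff incomp_def by (metis insert_iff order_refl)
    then show False using Cmax[of "insert x C"] False by blast
  qed
  then obtain c where c: "c \<in> C" "incomp x c" by blast
  have uniq: "\<And>d. d \<in> C \<Longrightarrow> d \<noteq> c \<Longrightarrow> x \<le> d \<or> d \<le> x"
  proof -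
    fix d assume d: "d \<in> C" "d \<noteq> c"
    show "x \<le> d \<or> d \<le> x"
    proof (rule ccontr)
      assume "\<not> ?thesis"
      then have "incomp d x" using False d unfolding incomp_def by blast
      moreover have "d \<noteq> x" "x \<noteq> c" using False d c by auto
      moreover have "d \<noteq> c" using d by simp
      moreover have "d \<in> S" "c \<in> S" using C d c by auto
      ultimately have "incomp d c" using trunkD[OF S, of d x c] x c by blast
      then show False using Cch c d unfolding chain_le_iff incomp_def by blast
    qed
  qed
  let ?C' = "insert x (C - {c})"
  have ch': "Complete_Partial_Order.chain (\<le>) ?C'"
    unfolding chain_le_iff
  proof (intro ballI)
    fix a b assume a: "a \<in> ?C'" and b: "b \<in> ?C'"
    show "a \<le> b \<or> b \<le> a"
    proof (cases "a = x")
      case True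
      then show ?thesis using b uniq by (cases "b = x") auto
    next
      case False
      then have "a \<in> C" "a \<noteq> c" using a by auto
      then show ?thesis using b uniq Cch unfolding chain_le_iff by (cases "b = x") auto
    qed
  qed
  obtain M where M: "maximal_chain M" "?C' \<subseteq> M" using extend_chain[OF ch'] by blast
  have "bij_betw (id(c := x)) C ?C'"
    unfolding bij_betw_def inj_on_def using False c by auto
  then have iso: "(card_of C, card_of ?C') \<in> ordIso" using card_of_ordIso by blast
  have le: "(card_of ?C', card_of M) \<in> ordLeq" using card_of_mono1[OF M(2)] .
  have CM: "(card_of C, card_of M) \<in> ordLeq"
    using ordIso_ordLeq_trans[OF iso le] .
  have "maximum_chain M"
    unfolding maximum_chain_def
  proof (intro conjI M(1) notI)
    assume "\<exists>D::'a set. Complete_Partial_Order.chain (\<le>) D \<and> (card_of M, card_of D) \<in> ordLess"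
    then obtain D :: "'a set" where "Complete_Partial_Order.chain (\<le>) D" "(card_of M, card_of D) \<in> ordLess" by blast
    moreover have "(card_of C, card_of D) \<in> ordLess" using ordLeq_ordLess_trans[OF CM calculation(2)] .
    ultimately show False using C unfolding maximum_chain_def by blast
  qed
  then show ?thesis using M by blast
qed

theorem corollary5p7:
  fixes dummy :: "'a::order"
  assumes "\<exists>C::'a set. maximum_chain C"
  shows "(\<forall>R::'a set. rel_max_full_trunk R \<longrightarrow> R = \<Union>{C. maximum_chain C})
     \<and> ((\<exists>R::'a set. rel_max_full_trunk R) \<longleftrightarrow> trunk (\<Union>{C::'a set. maximum_chain C}))"
proof -
  let ?U = "\<Union>{C::'a set. maximum_chain C}"
  have sub: "\<And>S::'a set. full_trunk S \<Longrightarrow> S \<subseteq> ?U"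
  proof
    fix S :: "'a set" and x assume "full_trunk S" "x \<in> S"
    then obtain C where "trunk S" "maximum_chain C" "C \<subseteq> S" unfolding full_trunk_def by blast
    then show "x \<in> ?U" using trunk_in_union \<open>x \<in> S\<close> by blast
  qed
  have part1: "\<forall>R::'a set. rel_max_full_trunk R \<longrightarrow> R = ?U"
  proof (intro allI impI)
    fix R :: "'a set" assume R: "rel_max_full_trunk R"
    have "?U \<subseteq> R"
    proof
      fix x assume "x \<in> ?U"
      then obtain C where C: "maximum_chain C" "x \<in> C" by blast
      then have "Complete_Partial_Order.chain (\<le>) C" unfolding maximum_chain_def maximal_chain_def by blast
      then obtain M where M: "trunk M" "C \<subseteq> M" "\<forall>S. trunk S \<and> M \<subseteq> S \<longrightarrow> S = M"
        using extend_trunk by blast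
      have "maximal_full_trunk M" unfolding maximal_full_trunk_def full_trunk_def using M C by blast
      then have "M = R" using R unfolding rel_max_full_trunk_def by blast
      then show "x \<in> R" using M C by blast
    qed
    moreover have "full_trunk R" using R unfolding rel_max_full_trunk_def maximal_full_trunk_def by blast
    then have "R \<subseteq> ?U" by (rule sub)
    ultimately show "R = ?U" by blast
  qed
  have part2: "trunk ?U \<Longrightarrow> rel_max_full_trunk ?U"
  proof -
    assume t: "trunk ?U"
    obtain C0 :: "'a set" where C0: "maximum_chain C0" using assms by blast
    have "C0 \<subseteq> ?U" using C0 by blast
    then have ft: "full_trunk ?U" unfolding full_trunk_def using t C0 by blast
    have mft: "maximal_full_trunk ?U"
      unfolding maximal_full_trunk_def
    proof (intro conjI ft allI impI)
      fix S :: "'a set" assume "full_trunk S \<and> ?U \<subseteq> S"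
      then show "S = ?U" using sub[of S] by blast
    qed
    have "\<forall>S. maximal_full_trunk S \<longrightarrow> S = ?U"
    proof (intro allI impI)
      fix S :: "'a set" assume S: "maximal_full_trunk S"
      then have "full_trunk S" "\<forall>T. full_trunk T \<and> S \<subseteq> T \<longrightarrow> T = S"
        unfolding maximal_full_trunk_def by blast+
      moreover have "S \<subseteq> ?U" using sub calculation(1) by blast
      ultimately show "S = ?U" using ft by blast
    qed
    then show ?thesis unfolding rel_max_full_trunk_def using mft by blast
  qed
  have "(\<exists>R::'a set. rel_max_full_trunk R) \<Longrightarrow> trunk ?U"
  proof -
    assume "\<exists>R::'a set. rel_max_full_trunk R"
    then obtain R :: "'a set" where R: "rel_max_full_trunk R" by blast
    then have "R = ?U" using part1 by blast
    moreover have "trunk R" using R unfolding rel_max_full_trunk_def maximal_full_trunk_def full_trunk_def by blast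
    ultimately show "trunk ?U" by simp
  qed
  then show ?thesis using part1 part2 by blast
qed

end
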